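(* Let $r>1$ and let $f$ be a real analytic function on $\{|z|<r\}$ (real Taylor coefficients) with $f(0)>0$ whose zeros in the closed unit disk are all real and simple; let $z_1,\dots,z_M$ be its zeros in $|z|<1$ and let $s$ be the number of indices $j$ for which the canonical weight $\frac{(z_j-1/z_j)^2}{z_jf'(z_j)f(1/z_j)}$ is negative. Then there is a polynomial $\tilde g$ of degree at most $2s$, all of whose roots are real with modulus greater than $1$, such that the canonical weights of $f\tilde g$ at all its zeros in the open unit disk, $\frac{(z_j-1/z_j)^2}{z_j(f\tilde g)'(z_j)(f\tilde g)(1/z_j)}$, are positive. *)

theory Defs
  imports "HOL-Analysis.Analysis" "HOL-Computational_Algebra.Polynomial"
begin

definition canonical_weight :: "(complex \<Rightarrow> complex) \<Rightarrow> complex \<Rightarrow> complex" where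
  "canonical_weight F z = (z - 1 / z)\<^sup>2 / (z * deriv F z * F (1 / z))"

end

theory Submission
  imports Defs "HOL-Complex_Analysis.Complex_Analysis"
begin

lemma real_on_reals:
  assumes h: "h holomorphic_on ball 0 r" and d: "\<forall>n. (deriv ^^ n) h 0 \<in> \<real>"
    and x: "x \<in> \<real>" "x \<in> ball 0 r"
  shows "h x \<in> \<real>"
proof -
  have s: "(\<lambda>n. (deriv ^^ n) h 0 / (fact n) * (x-0)^n) sums h x"
    by (rule holomorphic_power_series[OF h x(2)])
  have "(\<lambda>n. Im ((deriv ^^ n) h 0 / (fact n) * (x-0)^n)) sums Im (h x)"
    using sums_Im[OF s] .
  moreover have "Im ((deriv ^^ n) h 0 / (fact n) * (x-0)^n) = 0" for n
  proof -
    have a: "(deriv ^^ n) h 0 \<in> \<real>" using d by blast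
    have b: "(fact n :: complex) \<in> \<real>" by (metis Reals_of_nat of_nat_fact)
    have "(deriv ^^ n) h 0 / (fact n) * (x-0)^n \<in> \<real>"
      using a b x(1) by (intro Reals_mult Reals_divide Reals_power) auto
    thus ?thesis by (simp add: complex_is_Real_iff)
  qed
  ultimately have "Im (h x) = 0"
    by (simp add: sums_iff)
  thus ?thesis by (simp add: complex_is_Real_iff)
qed

lemma map_poly_of_real_mult:
  "map_poly complex_of_real (p * q) = map_poly of_real p * map_poly of_real q"
  by (rule poly_eqI) (simp add: coeff_mult coeff_map_poly)

lemma map_poly_of_real_prod:
  "finite A \<Longrightarrow> map_poly complex_of_real (\<Prod>x\<in>A. p x) = (\<Prod>x\<in>A. map_poly of_real (p x))"
  by (induction A rule: finite_induct) (simp_all add: map_poly_of_real_mult)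

lemma poly_map_of_real_real:
  "poly (map_poly complex_of_real p) (of_real u) = of_real (poly p u)"
  by (induction p) (auto simp: map_poly_pCons)


theorem lemma4p6:
  fixes f :: "complex \<Rightarrow> complex" and r :: real
  assumes r_gt: "r > 1"
    and holo: "f holomorphic_on ball 0 r"
    and real_coeffs: "\<forall>n. (deriv ^^ n) f 0 \<in> \<real>"
    and f0_pos: "Re (f 0) > 0"
    and zeros_real_simple: "\<forall>z. cmod z \<le> 1 \<longrightarrow> f z = 0 \<longrightarrow> z \<in> \<real> \<and> deriv f z \<noteq> 0"
    and weights_defined: "\<forall>z. cmod z < 1 \<longrightarrow> f z = 0 \<longrightarrow> 1 / z \<in> ball 0 r \<and> f (1 / z) \<noteq> 0"
  shows "\<exists>g :: real poly.
           degree g \<le> 2 * card {z. cmod z < 1 \<and> f z = 0 \<and>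
                                  canonical_weight f z \<in> \<real> \<and> Re (canonical_weight f z) < 0}
         \<and> (\<forall>z. poly (map_poly complex_of_real g) z = 0 \<longrightarrow> z \<in> \<real> \<and> cmod z > 1)
         \<and> (\<forall>z. cmod z < 1 \<longrightarrow> f z * poly (map_poly complex_of_real g) z = 0 \<longrightarrow>
               canonical_weight (\<lambda>w. f w * poly (map_poly complex_of_real g) w) z \<in> \<real>
             \<and> Re (canonical_weight (\<lambda>w. f w * poly (map_poly complex_of_real g) w) z) > 0)"
proof -
  define Z where "Z = {z. cmod z < 1 \<and> f z = 0}"
  define B where "B = {z. cmod z < 1 \<and> f z = 0 \<and>
                                  canonical_weight f z \<in> \<real> \<and> Re (canonical_weight f z) < 0}"
  have BZ: "B \<subseteq> Z" unfolding B_def Z_def by auto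
  have f0: "f 0 \<noteq> 0" using f0_pos by auto
  have finZ: "finite Z"
  proof (cases "f constant_on ball 0 r")
    case True
    then obtain c where c: "\<forall>z\<in>ball 0 r. f z = c" unfolding constant_on_def by blast
    have "Z = {}"
    proof -
      { fix z assume "z \<in> Z"
        hence "cmod z < 1" "f z = 0" unfolding Z_def by auto
        hence "f z = f 0" using c r_gt by auto
        hence False using f0 \<open>f z = 0\<close> by simp }
      thus ?thesis by blast
    qed
    thus ?thesis by simp
  next
    case False
    have "finite {z\<in>cball 0 1. f z = 0}"
      by (rule holomorphic_compact_finite_zeros[OF holo]) (use False r_gt in auto)
    moreover have "Z \<subseteq> {z\<in>cball 0 1. f z = 0}" unfolding Z_def by auto
    ultimately show ?thesis by (rule finite_subset[rotated])
  qed
  have finB: "finite B" using finZ BZ finite_subset by blast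
  have opn: "open (ball (0::complex) r)" by simp
  have dholo: "deriv f holomorphic_on ball 0 r" by (rule holomorphic_deriv[OF holo opn])
  have dreal: "\<forall>n. (deriv ^^ n) (deriv f) 0 \<in> \<real>"
  proof
    fix n
    have "(deriv ^^ n) (deriv f) = (deriv ^^ Suc n) f" by (simp add: funpow_Suc_right del: funpow.simps)
    thus "(deriv ^^ n) (deriv f) 0 \<in> \<real>" using real_coeffs by metis
  qed
  have Zprops: "z \<noteq> 0 \<and> z \<in> \<real> \<and> 1/z \<in> \<real> \<and> cmod z < 1 \<and> f z = 0 \<and> deriv f z \<noteq> 0 \<and> deriv f z \<in> \<real>
     \<and> f (1/z) \<in> \<real> \<and> f (1/z) \<noteq> 0 \<and> cmod (1/z) > 1 \<and> z \<in> ball 0 r" if "z \<in> Z" for z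
  proof -
    have z: "cmod z < 1" "f z = 0" using that unfolding Z_def by auto
    have nz: "z \<noteq> 0" using z f0 by auto
    have zr: "z \<in> \<real>" "deriv f z \<noteq> 0" using zeros_real_simple z by auto
    have iz: "1/z \<in> ball 0 r" "f (1/z) \<noteq> 0" using weights_defined z by auto
    have zb: "z \<in> ball 0 r" using z r_gt by simp
    have izr: "1/z \<in> \<real>" using zr by (simp add: Reals_divide)
    have "deriv f z \<in> \<real>" by (rule real_on_reals[OF dholo dreal zr(1) zb])
    moreover have "f (1/z) \<in> \<real>" by (rule real_on_reals[OF holo real_coeffs izr iz(1)])
    moreover have "cmod (1/z) > 1" using z nz by (simp add: norm_divide divide_simps)
    ultimately show ?thesis using z nz zr iz zb izr by blast
  qed
  define D where "D = (\<lambda>z. cmod (1/z) - 1) ` Z \<union> (\<lambda>(z,w). cmod (1/z - 1/w)) ` {p\<in>Z\<times>Z. fst p \<noteq> snd p} \<union> {1}"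
  have finD: "finite D" unfolding D_def using finZ by auto
  have Dpos: "\<forall>d\<in>D. d > 0"
  proof
    fix d assume "d \<in> D"
    then consider (a) z where "z \<in> Z" "d = cmod (1/z) - 1"
      | (b) z w where "z \<in> Z" "w \<in> Z" "z \<noteq> w" "d = cmod (1/z - 1/w)" | (c) "d = 1"
      unfolding D_def by auto
    then show "d > 0"
    proof cases
      case a then show ?thesis using Zprops[of z] by auto
    next
      case b
      have "1/z \<noteq> 1/w" using b by auto
      then show ?thesis using b by simp
    qed simp
  qed
  define \<delta> where "\<delta> = Min D / 2"
  have D1: "1 \<in> D" unfolding D_def by simp
  have Dmin: "Min D > 0" using Dpos finD D1 Min_in[OF finD] by blast
  have \<delta>pos: "\<delta> > 0" unfolding \<delta>_def using Dmin by simp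
  have \<delta>le: "\<delta> < d" if "d \<in> D" for d
  proof -
    have "Min D \<le> d" using finD that by simp
    thus ?thesis unfolding \<delta>_def using Dmin by simp
  qed
  have \<delta>1: "\<delta> < cmod (1/z) - 1" if "z \<in> Z" for z
  proof -
    have "cmod (1/z) - 1 \<in> D" unfolding D_def using that by (intro UnI1 imageI)
    thus ?thesis by (rule \<delta>le)
  qed
  have \<delta>2: "\<delta> < cmod (1/z - 1/w)" if "z \<in> Z" "w \<in> Z" "z \<noteq> w" for z w
  proof -
    have "(z,w) \<in> {p\<in>Z\<times>Z. fst p \<noteq> snd p}" using that by simp
    hence "(\<lambda>(z,w). cmod (1/z - 1/w)) (z,w) \<in> (\<lambda>(z,w). cmod (1/z - 1/w)) ` {p\<in>Z\<times>Z. fst p \<noteq> snd p}"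
      by (rule imageI)
    hence "cmod (1/z - 1/w) \<in> D" unfolding D_def by simp
    thus ?thesis by (rule \<delta>le)
  qed
  define t where "t z = Re (1/z)" for z
  have tz: "complex_of_real (t z) = 1/z" "cmod (1/z) = \<bar>t z\<bar>" if "z \<in> Z" for z
  proof -
    have "1/z \<in> \<real>" using Zprops[OF that] by blast
    then show "complex_of_real (t z) = 1/z" unfolding t_def by (simp add: complex_is_Real_iff complex_eq_iff)
    then show "cmod (1/z) = \<bar>t z\<bar>" by (metis norm_of_real)
  qed
  define q where "q z = [: (t z)^2 - \<delta>^2, -2 * t z, 1 :]" for z
  define g where "g = (\<Prod>z\<in>B. q z)"
  define G where "G = poly (map_poly complex_of_real g)"
  have Geq: "G x = (\<Prod>z\<in>B. (x - 1/z)^2 - (of_real \<delta>)^2)" for x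
  proof -
    have "G x = (\<Prod>z\<in>B. poly (map_poly complex_of_real (q z)) x)"
      unfolding G_def g_def by (simp add: map_poly_of_real_prod[OF finB] poly_prod)
    also have "\<dots> = (\<Prod>z\<in>B. (x - 1/z)^2 - (of_real \<delta>)^2)"
    proof (rule prod.cong[OF refl])
      fix z assume "z \<in> B"
      hence "complex_of_real (t z) = 1/z" using tz BZ by blast
      thus "poly (map_poly complex_of_real (q z)) x = (x - 1/z)^2 - (of_real \<delta>)^2"
        unfolding q_def by (simp add: map_poly_pCons power2_eq_square algebra_simps)
    qed
    finally show ?thesis .
  qed
  have Greal: "G (of_real u) = of_real (\<Prod>z\<in>B. (u - t z)^2 - \<delta>^2)" for u
    unfolding G_def g_def poly_map_of_real_real poly_prod q_def
    by (simp add: power2_eq_square algebra_simps)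
  have deg: "degree g \<le> 2 * card B"
  proof -
    have "degree g \<le> sum (degree \<circ> q) B" unfolding g_def by (rule degree_prod_sum_le[OF finB])
    also have "\<dots> = 2 * card B" by (simp add: q_def)
    finally show ?thesis .
  qed
  have roots: "x \<in> \<real> \<and> cmod x > 1" if "G x = 0" for x
  proof -
    have "(\<Prod>z\<in>B. (x - 1/z)^2 - (of_real \<delta>)^2) = 0" using that Geq[of x] by simp
    hence "\<exists>z\<in>B. (x - 1/z)^2 - (of_real \<delta>)^2 = 0" by (simp only: prod_zero_iff[OF finB])
    then obtain z where zB: "z \<in> B" and e: "(x - 1/z)^2 - (of_real \<delta>)^2 = 0" by (elim bexE)
    have zZ: "z \<in> Z" using zB BZ by blast
    have "(x - 1/z)^2 = (of_real \<delta>)^2" using e by simp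
    hence e2: "x - 1/z = of_real \<delta> \<or> x - 1/z = - of_real \<delta>" by (simp add: power2_eq_iff)
    have dr: "x - 1/z \<in> \<real>" using e2 by (metis Reals_of_real Reals_minus)
    have izr: "1/z \<in> \<real>" using Zprops[OF zZ] by blast
    have xr: "x \<in> \<real>" using Reals_add[OF izr dr] by simp
    have n: "cmod (x - 1/z) = \<delta>" using e2 \<delta>pos by (metis norm_minus_cancel norm_of_real abs_of_pos)
    have "cmod (1/z) \<le> cmod x + cmod (x - 1/z)"
      using norm_triangle_ineq4[of x "x - 1/z"] by simp
    hence "cmod x > 1" using n \<delta>1[OF zZ] by linarith
    thus ?thesis using xr by blast
  qed
  have Gdiff: "G field_differentiable at x" for x
    unfolding G_def field_differentiable_def using poly_DERIV by blast
  have main: "canonical_weight (\<lambda>w. f w * G w) k \<in> \<real> \<and> Re (canonical_weight (\<lambda>w. f w * G w) k) > 0"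
    if k1: "cmod k < 1" and k0: "f k * G k = 0" for k
  proof -
    have Gk: "G k \<noteq> 0" using roots[of k] k1 by auto
    hence "f k = 0" using k0 by simp
    hence kZ: "k \<in> Z" unfolding Z_def using k1 by simp
    note P = Zprops[OF kZ]
    define u where "u = Re k"
    have ku: "k = of_real u" unfolding u_def using P by (simp add: complex_is_Real_iff complex_eq_iff)
    have u0: "u \<noteq> 0" using P ku by auto
    have u1: "\<bar>u\<bar> < 1" using k1 ku by simp
    have iku: "1/k = of_real (1/u)" using ku by simp
    have tk: "t k = 1/u" unfolding t_def using iku by simp
    define A where "A = (\<Prod>z\<in>B. (u - t z)^2 - \<delta>^2)"
    define Bv where "Bv = (\<Prod>z\<in>B. (1/u - t z)^2 - \<delta>^2)"
    have GA: "G k = of_real A" unfolding A_def ku by (rule Greal)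
    have GB: "G (1/k) = of_real Bv" unfolding Bv_def iku by (rule Greal)
    have sq: "(a::real)^2 - \<delta>^2 > 0" if "\<bar>a\<bar> > \<delta>" for a
    proof -
      have "\<delta>^2 < \<bar>a\<bar>^2" using that \<delta>pos by (intro power_strict_mono) auto
      thus ?thesis by simp
    qed
    have Apos: "A > 0" unfolding A_def
    proof (rule prod_pos)
      fix z assume "z \<in> B"
      hence zZ: "z \<in> Z" using BZ by blast
      have "\<bar>u - t z\<bar> \<ge> \<bar>t z\<bar> - \<bar>u\<bar>" by linarith
      moreover have "\<delta> < \<bar>t z\<bar> - 1" using \<delta>1[OF zZ] tz(2)[OF zZ] by simp
      ultimately show "(u - t z)^2 - \<delta>^2 > 0" using u1 by (intro sq) linarith
    qed
    have other: "(1/u - t z)^2 - \<delta>^2 > 0" if "z \<in> B" "z \<noteq> k" for z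
    proof -
      have zZ: "z \<in> Z" using that BZ by blast
      have "cmod (1/k - 1/z) = \<bar>1/u - t z\<bar>"
        using iku tz(1)[OF zZ] by (metis norm_of_real of_real_diff)
      thus ?thesis using \<delta>2[OF kZ zZ] that by (intro sq) auto
    qed
    have cw_real: "canonical_weight f k \<in> \<real>" unfolding canonical_weight_def
      using P by (intro Reals_divide Reals_mult Reals_power Reals_diff) auto
    have kk: "k - 1/k \<noteq> 0"
    proof
      assume "k - 1/k = 0"
      hence "u - 1/u = 0" using ku iku by (metis of_real_diff of_real_eq_0_iff)
      hence "u * u = 1" using u0 by (simp add: field_simps)
      hence "\<bar>u\<bar> * \<bar>u\<bar> = 1" by (metis abs_mult abs_one)
      thus False using u1 mult_strict_mono[of "\<bar>u\<bar>" 1 "\<bar>u\<bar>" 1] by force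
    qed
    have cw_nz: "canonical_weight f k \<noteq> 0" unfolding canonical_weight_def using P kk by simp
    define c where "c = Re (canonical_weight f k)"
    have cwc: "canonical_weight f k = of_real c" unfolding c_def using cw_real
      by (simp add: complex_is_Real_iff complex_eq_iff)
    have c0: "c \<noteq> 0" using cw_nz cwc by auto
    have fdk: "f field_differentiable at k" using holomorphic_on_imp_differentiable_at[OF holo opn] P by blast
    have dF: "deriv (\<lambda>w. f w * G w) k = deriv f k * G k"
      using deriv_mult[OF fdk Gdiff[of k]] P by simp
    have "canonical_weight (\<lambda>w. f w * G w) k = canonical_weight f k / (G k * G (1/k))"
      unfolding canonical_weight_def dF by (simp add: mult_ac)
    also have "\<dots> = of_real (c / (A * Bv))" using cwc GA GB by simp
    finally have eq: "canonical_weight (\<lambda>w. f w * G w) k = of_real (c / (A * Bv))" .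
    have "c / (A * Bv) > 0"
    proof (cases "k \<in> B")
      case True
      have cneg: "c < 0" using True unfolding B_def c_def by simp
      have "Bv = ((1/u - t k)^2 - \<delta>^2) * (\<Prod>z\<in>B-{k}. (1/u - t z)^2 - \<delta>^2)"
        unfolding Bv_def using prod.remove[OF finB True] .
      moreover have "(\<Prod>z\<in>B-{k}. (1/u - t z)^2 - \<delta>^2) > 0" using other by (intro prod_pos) auto
      moreover have "(1/u - t k)^2 - \<delta>^2 < 0" using tk \<delta>pos by simp
      ultimately have "Bv < 0" by (simp add: mult_neg_pos)
      hence "A * Bv < 0" using Apos by (simp add: mult_pos_neg)
      thus ?thesis using cneg by (simp add: divide_neg_neg)
    next
      case False
      have "Bv > 0" unfolding Bv_def using other False by (intro prod_pos) auto
      moreover have "c \<ge> 0" using False kZ cw_real unfolding B_def Z_def c_def by auto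
      ultimately show ?thesis using c0 Apos by simp
    qed
    thus ?thesis using eq by simp
  qed
  show ?thesis
  proof (intro exI conjI allI impI)
    show "degree g \<le> 2 * card {z. cmod z < 1 \<and> f z = 0 \<and>
                                  canonical_weight f z \<in> \<real> \<and> Re (canonical_weight f z) < 0}"
      using deg unfolding B_def .
  next
    fix z assume "poly (map_poly complex_of_real g) z = 0"
    thus "z \<in> \<real>" "cmod z > 1" using roots unfolding G_def by auto
  next
    fix z assume "cmod z < 1" "f z * poly (map_poly complex_of_real g) z = 0"
    thus "canonical_weight (\<lambda>w. f w * poly (map_poly complex_of_real g) w) z \<in> \<real>"
      "Re (canonical_weight (\<lambda>w. f w * poly (map_poly complex_of_real g) w) z) > 0"
      using main unfolding G_def by auto
  qed
qed

end
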